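(* Let $m\ge 1$ and $d=2^{2m}-1$. If there exists a $(2^{2m},m,p)$-QRA coding with $p>1/2$, then there exist vectors $\vec s_1,\dots,\vec s_{2^{2m}}\in\mathbb{R}^{d}$ and reals $c_1,\dots,c_{2^{2m}}$ such that for every $w\in\{0,1\}^{2^{2m}}$ the set $$D_w=\{\vec r\in\mathbb{R}^{d} : \vec r\cdot\vec s_i>c_i \text{ for all } i \text{ with } w_i=0,\ \vec r\cdot\vec s_i<c_i \text{ for all } i \text{ with } w_i=1\}$$ is nonempty (indeed it contains the Bloch vector of an $m$-qubit state). In other words, $\mathbb{R}^{2^{2m}-1}$ is divided into $2^{2^{2m}}$ distinct nonempty regions by the $2^{2m}$ hyperplanes $\{\vec r:\vec r\cdot\vec s_i=c_i\}$.
   Context: An $(n,m,p)$-quantum random access (QRA) coding is a map assigning to each $n$-bit string $x\in\{0,1\}^n$ an $m$-qubit state $\rho_x$ (a positive semidefinite trace-one operator on $\mathbb{C}^{2^m}$) such that for every $i\in\{1,\dots,n\}$ there is a POVM $E^i=\{E^i_0,E^i_1\}$ (i.e. $E^i_0,E^i_1$ are positive semidefinite Hermitian operators on $\mathbb{C}^{2^m}$ with $E^i_0+E^i_1=I$) satisfying $\mathrm{Tr}(E^i_{x_i}\rho_x)\ge p$ for all $x\in\{0,1\}^n$, where $x_i$ is the $i$-th bit of $x$. Bloch vectors of $N$-level states ($N=2^m$): fix Hermitian traceless matrices $\lambda_1,\dots,\lambda_{N^2-1}$ with $\mathrm{Tr}(\lambda_i\lambda_j)=2\delta_{ij}$; every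 $N\times N$ density matrix can be written uniquely as $\rho=\frac1N I_N+\frac12\sum_{k=1}^{N^2-1}r_k\lambda_k$ with $\vec r=(r_1,\dots,r_{N^2-1})\in\mathbb{R}^{N^2-1}$, the Bloch vector of $\rho$. *)

theory Defs
  imports "Jordan_Normal_Form.Matrix"
begin

definition hermitian_mat :: "nat \<Rightarrow> complex mat \<Rightarrow> bool" where
  "hermitian_mat N A \<longleftrightarrow> A \<in> carrier_mat N N \<and>
     (\<forall>i<N. \<forall>j<N. A $$ (i, j) = cnj (A $$ (j, i)))"

definition psd_mat :: "nat \<Rightarrow> complex mat \<Rightarrow> bool" where
  "psd_mat N A \<longleftrightarrow> hermitian_mat N A \<and>
     (\<forall>v \<in> carrier_vec N. 0 \<le> Re (conjugate v \<bullet> (A *\<^sub>v v)))"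

definition mat_trace :: "complex mat \<Rightarrow> complex" where
  "mat_trace A = (\<Sum>i < dim_row A. A $$ (i, i))"

definition density_mat :: "nat \<Rightarrow> complex mat \<Rightarrow> bool" where
  "density_mat N \<rho> \<longleftrightarrow> psd_mat N \<rho> \<and> mat_trace \<rho> = 1"

definition povm2 :: "nat \<Rightarrow> complex mat \<Rightarrow> complex mat \<Rightarrow> bool" where
  "povm2 N E0 E1 \<longleftrightarrow> psd_mat N E0 \<and> psd_mat N E1 \<and> E0 + E1 = 1\<^sub>m N"

text \<open>(n,m,p)-QRA coding: n-bit strings are bool lists of length n (True = bit 1),
  bits are indexed 0..n-1; states live on C^(2^m).\<close>
definition qra_coding :: "nat \<Rightarrow> nat \<Rightarrow> real \<Rightarrow> (bool list \<Rightarrow> complex mat) \<Rightarrow> bool" where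
  "qra_coding n m p \<rho> \<longleftrightarrow>
     (\<forall>x. length x = n \<longrightarrow> density_mat (2 ^ m) (\<rho> x)) \<and>
     (\<forall>i<n. \<exists>E0 E1. povm2 (2 ^ m) E0 E1 \<and>
        (\<forall>x. length x = n \<longrightarrow>
           p \<le> Re (mat_trace ((if x ! i then E1 else E0) * \<rho> x))))"

end

theory Submission imports Defs begin

lemma reidx:
  fixes g :: "nat \<Rightarrow> nat \<Rightarrow> real"
  shows "(\<Sum>k<N*N. g (k div N) (k mod N)) = (\<Sum>j<N. \<Sum>l<N. g j l)"
proof -
  have b: "bij_betw (\<lambda>k. (k div N, k mod N)) {..<N*N} ({..<N} \<times> {..<N})"
  proof (rule bij_betw_imageI)
    show "inj_on (\<lambda>k. (k div N, k mod N)) {..<N * N}"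
    proof (rule inj_onI)
      fix a b assume "(a div N, a mod N) = (b div N, b mod N)"
      then have "a div N = b div N" "a mod N = b mod N" by auto
      then show "a = b" by (metis div_mult_mod_eq)
    qed
    show "(\<lambda>k. (k div N, k mod N)) ` {..<N * N} = {..<N} \<times> {..<N}"
    proof
      show "(\<lambda>k. (k div N, k mod N)) ` {..<N * N} \<subseteq> {..<N} \<times> {..<N}"
      proof
        fix x assume "x \<in> (\<lambda>k. (k div N, k mod N)) ` {..<N * N}"
        then obtain k where k: "k < N*N" "x = (k div N, k mod N)" by auto
        have "N > 0" using k(1) by (cases N) auto
        then have "k mod N < N" by simp
        moreover have "k div N < N" using k(1) by (simp add: less_mult_imp_div_less)
        ultimately show "x \<in> {..<N} \<times> {..<N}" using k(2) by simp
      qed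
      show "{..<N} \<times> {..<N} \<subseteq> (\<lambda>k. (k div N, k mod N)) ` {..<N * N}"
      proof
        fix x assume x: "x \<in> {..<N} \<times> {..<N}"
        then obtain j l where jl: "x = (j,l)" "j < N" "l < N" by auto
        have "(j+1)*N \<le> N*N" using jl(2) by (intro mult_le_mono1) simp
        then have "j*N + l < N*N" using jl(3) by simp
        moreover have "((j*N+l) div N, (j*N+l) mod N) = x" using jl by simp
        ultimately show "x \<in> (\<lambda>k. (k div N, k mod N)) ` {..<N * N}"
          by (intro image_eqI[where x="j*N+l"]) auto
      qed
    qed
  qed
  have "(\<Sum>k<N*N. g (k div N) (k mod N)) = (\<Sum>x\<in>{..<N} \<times> {..<N}. g (fst x) (snd x))"
    using sum.reindex_bij_betw[OF b, of "\<lambda>x. g (fst x) (snd x)"] by simp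
  also have "\<dots> = (\<Sum>j<N. \<Sum>l<N. g j l)"
    by (simp add: sum.cartesian_product split_beta)
  finally show ?thesis .
qed

lemma trace_prod:
  assumes "A \<in> carrier_mat N N" "B \<in> carrier_mat N N"
  shows "mat_trace (A*B) = (\<Sum>j<N. \<Sum>l<N. A$$(j,l) * B$$(l,j))"
  using assms unfolding mat_trace_def
  by (auto simp: scalar_prod_def lessThan_atLeast0 intro!: sum.cong)

definition qc :: "complex mat \<Rightarrow> nat \<Rightarrow> nat \<Rightarrow> real" where
  "qc R j l = Re (R$$(j,l)) + Im (R$$(j,l))"

definition tc :: "complex mat \<Rightarrow> nat \<Rightarrow> nat \<Rightarrow> real" where
  "tc E j l = (Re (E$$(l,j)) - Im (E$$(l,j)) + Re (E$$(j,l)) + Im (E$$(j,l))) / 2"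

lemma herm_entry:
  assumes "hermitian_mat N R" "j < N" "l < N"
  shows "R$$(j,l) = cnj (R$$(l,j))"
  using assms unfolding hermitian_mat_def by blast

lemma herm_carrier:
  assumes "hermitian_mat N R"
  shows "R \<in> carrier_mat N N"
  using assms unfolding hermitian_mat_def by blast

lemma dens:
  assumes "density_mat N R"
  shows "hermitian_mat N R" "R \<in> carrier_mat N N" "mat_trace R = 1"
  using assms herm_carrier unfolding density_mat_def psd_mat_def by blast+

lemma povm_props:
  assumes "povm2 N E0 E1"
  shows "E0 \<in> carrier_mat N N" "E1 \<in> carrier_mat N N" "E0 + E1 = 1\<^sub>m N"
  using assms herm_carrier unfolding povm2_def psd_mat_def by blast+

lemma lin:
  assumes "hermitian_mat N R"
  shows "(\<Sum>j<N. \<Sum>l<N. Re (E$$(j,l) * R$$(l,j))) = (\<Sum>j<N. \<Sum>l<N. qc R j l * tc E j l)"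
proof -
  define f where "f j l = qc R j l * (Re (E$$(l,j)) - Im (E$$(l,j))) / 2" for j l
  define g where "g j l = qc R j l * (Re (E$$(j,l)) + Im (E$$(j,l))) / 2" for j l
  have 1: "qc R j l * tc E j l = f j l + g j l" for j l
    unfolding f_def g_def tc_def by (simp add: algebra_simps add_divide_distrib diff_divide_distrib)
  have 2: "(\<Sum>j<N. \<Sum>l<N. f j l) = (\<Sum>j<N. \<Sum>l<N. f l j)"
    by (rule sum.swap)
  have 3: "f l j + g j l = Re (E$$(j,l) * R$$(l,j))" if j: "j < N" and l: "l < N" for j l
  proof -
    have h: "R$$(j,l) = cnj (R$$(l,j))" using herm_entry[OF assms j l] .
    have "Re (R$$(j,l)) = Re (R$$(l,j))" "Im (R$$(j,l)) = - Im (R$$(l,j))" using h by simp_all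
    then show ?thesis unfolding f_def g_def qc_def by (simp add: algebra_simps add_divide_distrib diff_divide_distrib)
  qed
  have "(\<Sum>j<N. \<Sum>l<N. qc R j l * tc E j l) = (\<Sum>j<N. \<Sum>l<N. f j l) + (\<Sum>j<N. \<Sum>l<N. g j l)"
    by (simp only: 1 sum.distrib)
  also have "\<dots> = (\<Sum>j<N. \<Sum>l<N. f l j + g j l)"
    by (simp only: 2 sum.distrib)
  also have "\<dots> = (\<Sum>j<N. \<Sum>l<N. Re (E$$(j,l) * R$$(l,j)))"
    by (intro sum.cong refl) (simp add: 3)
  finally show ?thesis by simp
qed

lemma herm_diag:
  assumes "hermitian_mat N R" "j < N"
  shows "Im (R$$(j,j)) = 0"
proof -
  have "R$$(j,j) = cnj (R$$(j,j))" using herm_entry[OF assms assms(2)] .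
  then show ?thesis by (metis cnj.simps(2) add.inverse_unique add_eq_0_iff2 neg_equal_zero)
qed

lemma retr:
  assumes "hermitian_mat N R" "E \<in> carrier_mat N N"
  shows "Re (mat_trace (E * R)) = (\<Sum>k<N*N. qc R (k div N) (k mod N) * tc E (k div N) (k mod N))"
proof -
  have c: "R \<in> carrier_mat N N" using herm_carrier[OF assms(1)] .
  show ?thesis
    unfolding trace_prod[OF assms(2) c] Re_sum lin[OF assms(1)]
    by (rule reidx[symmetric, where g="\<lambda>j l. qc R j l * tc E j l"])
qed

lemma trace_one:
  assumes "density_mat N R"
  shows "(\<Sum>k<N*N. (if k div N = k mod N then 1 else 0) * qc R (k div N) (k mod N)) = 1"
proof -
  have h: "hermitian_mat N R" and c: "R \<in> carrier_mat N N" and t: "mat_trace R = 1"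
    using dens[OF assms] by auto
  have "(\<Sum>k<N*N. (if k div N = k mod N then 1 else 0) * qc R (k div N) (k mod N))
      = (\<Sum>j<N. \<Sum>l<N. (if j = l then 1 else 0) * qc R j l)"
    by (rule reidx[where g="\<lambda>j l. (if j = l then 1 else 0) * qc R j l"])
  also have "\<dots> = (\<Sum>j<N. qc R j j)"
  proof (intro sum.cong refl)
    fix j assume "j \<in> {..<N}"
    have "(\<Sum>l<N. (if j = l then 1 else 0) * qc R j l) = (\<Sum>l<N. (if j = l then qc R j l else 0))"
      by (intro sum.cong refl) simp
    also have "\<dots> = qc R j j" using \<open>j \<in> {..<N}\<close> by (simp add: sum.delta)
    finally show "(\<Sum>l<N. (if j = l then 1 else 0) * qc R j l) = qc R j j" .
  qed
  also have "\<dots> = (\<Sum>j<N. Re (R$$(j,j)))"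
    by (intro sum.cong refl) (simp add: qc_def herm_diag[OF h])
  also have "\<dots> = Re (mat_trace R)" unfolding mat_trace_def Re_sum using c by simp
  finally show ?thesis using t by simp
qed

lemma povm_sum:
  assumes "povm2 N E0 E1" "density_mat N R"
  shows "Re (mat_trace (E0 * R)) + Re (mat_trace (E1 * R)) = 1"
proof -
  have c0: "E0 \<in> carrier_mat N N" and c1: "E1 \<in> carrier_mat N N" and s: "E0 + E1 = 1\<^sub>m N"
    and c: "R \<in> carrier_mat N N" and t: "mat_trace R = 1"
    using povm_props[OF assms(1)] dens[OF assms(2)] by auto
  have e: "E0$$(j,l) + E1$$(j,l) = (if j = l then 1 else 0)" if "j < N" "l < N" for j l
  proof -
    have "(E0 + E1)$$(j,l) = E0$$(j,l) + E1$$(j,l)" using that c0 c1 by simp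
    then show ?thesis using s that by simp
  qed
  have "Re (mat_trace (E0 * R)) + Re (mat_trace (E1 * R)) =
     (\<Sum>j<N. \<Sum>l<N. Re ((E0$$(j,l) + E1$$(j,l)) * R$$(l,j)))"
    unfolding trace_prod[OF c0 c] trace_prod[OF c1 c] Re_sum sum.distrib[symmetric]
    by (simp add: distrib_right)
  also have "\<dots> = (\<Sum>j<N. \<Sum>l<N. (if j = l then Re (R$$(l,j)) else 0))"
    by (intro sum.cong refl) (simp add: e)
  also have "\<dots> = (\<Sum>j<N. Re (R$$(j,j)))" by simp
  also have "\<dots> = Re (mat_trace R)" unfolding mat_trace_def Re_sum using c by simp
  finally show ?thesis using t by simp
qed

lemma split_last:
  fixes Q T D :: "nat \<Rightarrow> real"
  assumes "(\<Sum>k<Suc L. D k * Q k) = 1" "D L = 1"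
  shows "(\<Sum>k<Suc L. Q k * T k) = (\<Sum>k<L. Q k * (T k - T L * D k)) + T L"
proof -
  have q: "Q L = 1 - (\<Sum>k<L. D k * Q k)" using assms by simp
  have "(\<Sum>k<L. Q k * (T k - T L * D k)) = (\<Sum>k<L. Q k * T k) - T L * (\<Sum>k<L. D k * Q k)"
    by (simp add: algebra_simps sum_subtractf sum_distrib_left)
  moreover have "(\<Sum>k<Suc L. Q k * T k) = (\<Sum>k<L. Q k * T k) + Q L * T L" by simp
  moreover have "Q L * T L = T L - T L * (\<Sum>k<L. D k * Q k)" unfolding q by (simp add: algebra_simps)
  ultimately show ?thesis by linarith
qed

lemma last_idx:
  fixes N :: nat
  assumes "N > 0"
  shows "(N*N - 1) div N = N - 1" "(N*N - 1) mod N = N - 1"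
proof -
  obtain M where N: "N = Suc M" using assms by (cases N) auto
  have e: "N*N - 1 = M + M * N" unfolding N by simp
  have MN: "M < N" "N \<noteq> 0" unfolding N by simp_all
  have "(M + M * N) div N = M + M div N" by (rule div_mult_self1[OF MN(2)])
  then show "(N*N - 1) div N = N - 1" unfolding e using MN by (simp add: N)
  have "(M + M * N) mod N = M mod N" by (rule mod_mult_self1)
  then show "(N*N - 1) mod N = N - 1" unfolding e using MN by (simp add: N)
qed

theorem lemma3:
  fixes m :: nat and p :: real
  assumes "m \<ge> 1"
    and "\<exists>\<rho>. qra_coding (2 ^ (2 * m)) m p \<rho>"
    and "p > 1 / 2"
  shows "\<exists>(s :: nat \<Rightarrow> nat \<Rightarrow> real) (c :: nat \<Rightarrow> real).
     \<forall>w :: bool list. length w = 2 ^ (2 * m) \<longrightarrow>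
       (\<exists>r :: nat \<Rightarrow> real. \<forall>i < 2 ^ (2 * m).
          (\<not> w ! i \<longrightarrow> (\<Sum>k < 2 ^ (2 * m) - 1. r k * s i k) > c i) \<and>
          (w ! i \<longrightarrow> (\<Sum>k < 2 ^ (2 * m) - 1. r k * s i k) < c i))"
proof -
  define N :: nat where "N = 2 ^ m"
  define n :: nat where "n = 2 ^ (2 * m)"
  have nN: "n = N * N" unfolding n_def N_def by (simp add: mult_2 power_add)
  have Npos: "N > 0" unfolding N_def by simp
  define L where "L = N * N - 1"
  have SL: "N * N = Suc L" unfolding L_def using Npos by simp
  obtain \<rho> where q: "qra_coding n m p \<rho>" using assms(2) n_def by auto
  have dens_all: "\<And>x. length x = n \<Longrightarrow> density_mat N (\<rho> x)"
    using q unfolding qra_coding_def N_def by blast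
  have "\<forall>i\<in>{..<n}. \<exists>E. povm2 N (fst E) (snd E) \<and>
        (\<forall>x. length x = n \<longrightarrow> p \<le> Re (mat_trace ((if x ! i then snd E else fst E) * \<rho> x)))"
  proof
    fix i assume "i \<in> {..<n}"
    then obtain E0 E1 where "povm2 N E0 E1"
      "\<forall>x. length x = n \<longrightarrow> p \<le> Re (mat_trace ((if x ! i then E1 else E0) * \<rho> x))"
      using q unfolding qra_coding_def N_def by auto
    then show "\<exists>E. povm2 N (fst E) (snd E) \<and>
        (\<forall>x. length x = n \<longrightarrow> p \<le> Re (mat_trace ((if x ! i then snd E else fst E) * \<rho> x)))"
      by (intro exI[where x="(E0, E1)"]) (simp only: fst_conv snd_conv)
  qed
  then obtain F where F: "\<And>i. i < n \<Longrightarrow> povm2 N (fst (F i)) (snd (F i)) \<and>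
        (\<forall>x. length x = n \<longrightarrow> p \<le> Re (mat_trace ((if x ! i then snd (F i) else fst (F i)) * \<rho> x)))"
    by (metis bchoice lessThan_iff)
  define D :: "nat \<Rightarrow> real" where "D k = (if k div N = k mod N then 1 else 0)" for k
  define T where "T i k = tc (fst (F i)) (k div N) (k mod N)" for i k
  define s where "s i k = T i k - T i L * D k" for i k
  define c :: "nat \<Rightarrow> real" where "c i = 1/2 - T i L" for i
  have DL: "D L = 1" unfolding D_def L_def using last_idx[OF Npos] by simp
  show ?thesis
  proof (rule exI[where x=s], rule exI[where x=c], intro allI impI)
    fix w :: "bool list" assume lw: "length w = 2 ^ (2 * m)"
    then have lw': "length w = n" unfolding n_def .
    define Q where "Q k = qc (\<rho> w) (k div N) (k mod N)" for k
    have dw: "density_mat N (\<rho> w)" using dens_all[OF lw'] .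
    have tr1: "(\<Sum>k<Suc L. D k * Q k) = 1"
      using trace_one[OF dw] unfolding SL D_def Q_def .
    have key: "Re (mat_trace (fst (F i) * \<rho> w)) = (\<Sum>k<L. Q k * s i k) + T i L" if i: "i < n" for i :: nat
    proof -
      have c0: "fst (F i) \<in> carrier_mat N N" using povm_props(1) F[OF i] by blast
      have "Re (mat_trace (fst (F i) * \<rho> w)) = (\<Sum>k<Suc L. Q k * T i k)"
        using retr[OF dens(1)[OF dw] c0] unfolding SL Q_def T_def .
      also have "\<dots> = (\<Sum>k<L. Q k * (T i k - T i L * D k)) + T i L"
        by (rule split_last[OF tr1 DL])
      finally show ?thesis unfolding s_def .
    qed
    show "\<exists>r :: nat \<Rightarrow> real. \<forall>i < 2 ^ (2 * m).
          (\<not> w ! i \<longrightarrow> (\<Sum>k < 2 ^ (2 * m) - 1. r k * s i k) > c i) \<and>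
          (w ! i \<longrightarrow> (\<Sum>k < 2 ^ (2 * m) - 1. r k * s i k) < c i)"
    proof (rule exI[where x=Q], intro allI impI)
      fix i :: nat assume "i < 2 ^ (2 * m)"
      then have i: "i < n" unfolding n_def .
      have Lm: "(2::nat) ^ (2 * m) - 1 = L" unfolding L_def using nN n_def by simp
      have Fi: "povm2 N (fst (F i)) (snd (F i))"
        "p \<le> Re (mat_trace ((if w ! i then snd (F i) else fst (F i)) * \<rho> w))"
        using F[OF i] lw' by auto
      have ps: "Re (mat_trace (fst (F i) * \<rho> w)) + Re (mat_trace (snd (F i) * \<rho> w)) = 1"
        by (rule povm_sum[OF Fi(1) dw])
      show "(\<not> w ! i \<longrightarrow> (\<Sum>k < 2 ^ (2 * m) - 1. Q k * s i k) > c i) \<and>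
          (w ! i \<longrightarrow> (\<Sum>k < 2 ^ (2 * m) - 1. Q k * s i k) < c i)"
      proof (intro conjI impI)
        assume "\<not> w ! i"
        then have "p \<le> Re (mat_trace (fst (F i) * \<rho> w))" using Fi(2) by simp
        then show "(\<Sum>k < 2 ^ (2 * m) - 1. Q k * s i k) > c i"
          unfolding Lm c_def using key[OF i] assms(3) by simp
      next
        assume "w ! i"
        then have "p \<le> Re (mat_trace (snd (F i) * \<rho> w))" using Fi(2) by simp
        then show "(\<Sum>k < 2 ^ (2 * m) - 1. Q k * s i k) < c i"
          unfolding Lm c_def using key[OF i] assms(3) ps by simp
      qed
    qed
  qed
qed

end
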